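(* Let $n\ge 2$ and $1\le m\le n$ be integers, and let $\mathbf g_1,\dots,\mathbf g_n\in\mathbb R^d$ be arbitrary vectors (the per-example negative gradients $\mathbf g_i=-\nabla_{\mathbf w} f_i(\mathbf w)$ at a fixed parameter $\mathbf w$). Put $\mathbf g=\frac1n\sum_{i=1}^n \mathbf g_i$ and assume $\mathbf g\neq 0$. Let $\mathbb I$ be a subset of $\{1,\dots,n\}$ of size $m$ drawn uniformly at random among all $\binom nm$ such subsets, and let $\hat{\mathbf g}=\frac1m\sum_{i\in\mathbb I}\mathbf g_i$. Let $\gamma=\max_{i,j\in\{1,\dots,n\}}|\langle \mathbf g_i,\mathbf g_j\rangle|$. Then $$0\le \mathbb E\|\hat{\mathbf g}\|-\|\mathbf g\|\le \frac{2(n-m)}{m(n-1)}\cdot\frac{\gamma}{\mathbb E\|\hat{\mathbf g}\|+\|\mathbf g\|}\le \frac{(n-m)\gamma}{m(n-1)\|\mathbf g\|},$$ $$\mathrm{Var}(\|\hat{\mathbf g}\|)\le \frac{2(n-m)}{m(n-1)}\gamma,$$ and consequently $$\frac{\sqrt{\mathrm{Var}(\|\hat{\mathbf g}\|)}}{\mathbb E\|\hat{\mathbf g}\|}\le\sqrt{\frac{2(n-m)}{m(n-1)}\cdot\frac{\gamma}{\|\mathbf g\|^2}}.$$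
   Context: $\|\cdot\|$ is the Euclidean norm and $\langle\cdot,\cdot\rangle$ the Euclidean inner product on $\mathbb R^d$. Expectation and variance are over the random choice of $\mathbb I$. *)

theory Defs
  imports "HOL-Analysis.Analysis" "HOL-Probability.Probability"
begin

definition batches :: "nat \<Rightarrow> nat \<Rightarrow> nat set set" where
  "batches n m = {I. I \<subseteq> {1..n} \<and> card I = m}"

definition full_grad :: "nat \<Rightarrow> (nat \<Rightarrow> 'a::real_vector) \<Rightarrow> 'a" where
  "full_grad n g = (1 / real n) *\<^sub>R (\<Sum>i=1..n. g i)"

definition batch_grad :: "nat \<Rightarrow> (nat \<Rightarrow> 'a::real_vector) \<Rightarrow> nat set \<Rightarrow> 'a" where
  "batch_grad m g I = (1 / real m) *\<^sub>R (\<Sum>i\<in>I. g i)"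

definition grad_gamma :: "nat \<Rightarrow> (nat \<Rightarrow> 'a::real_inner) \<Rightarrow> real" where
  "grad_gamma n g = Max {\<bar>inner (g i) (g j)\<bar> | i j. i \<in> {1..n} \<and> j \<in> {1..n}}"

end

theory Submission
  imports Defs
begin
lemma cntU:
  assumes "finite A" "U \<subseteq> A" "card U \<le> k"
  shows "card {I. I \<subseteq> A \<and> card I = k \<and> U \<subseteq> I} = (card A - card U) choose (k - card U)"
proof -
  have fU: "finite U" using assms finite_subset by blast
  have "{I. I \<subseteq> A \<and> card I = k \<and> U \<subseteq> I} = (\<lambda>J. J \<union> U) ` {J. J \<subseteq> A - U \<and> card J = k - card U}"
  proof (rule set_eqI, rule iffI)
    fix I assume "I \<in> {I. I \<subseteq> A \<and> card I = k \<and> U \<subseteq> I}"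
    hence I: "I \<subseteq> A" "card I = k" "U \<subseteq> I" by auto
    have fI: "finite I" using I assms finite_subset by blast
    have "card (I - U) = k - card U" using I fU fI by (simp add: card_Diff_subset)
    moreover have "I = (I - U) \<union> U" using I by blast
    ultimately show "I \<in> (\<lambda>J. J \<union> U) ` {J. J \<subseteq> A - U \<and> card J = k - card U}"
      using I by blast
  next
    fix I assume "I \<in> (\<lambda>J. J \<union> U) ` {J. J \<subseteq> A - U \<and> card J = k - card U}"
    then obtain J where J: "J \<subseteq> A - U" "card J = k - card U" "I = J \<union> U" by auto
    have fJ: "finite J" using J assms finite_subset by (meson finite_Diff)
    have "card I = k" using J fJ fU assms by (subst J(3), subst card_Un_disjoint) auto
    thus "I \<in> {I. I \<subseteq> A \<and> card I = k \<and> U \<subseteq> I}" using J assms by auto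
  qed
  also have "card \<dots> = card {J. J \<subseteq> A - U \<and> card J = k - card U}"
    by (rule card_image) (auto intro!: inj_onI)
  also have "\<dots> = card (A - U) choose (k - card U)" using assms by (simp add: n_subsets)
  finally show ?thesis using assms by (simp add: card_Diff_subset fU)
qed

lemma sum_swap_count:
  fixes f :: "'b \<Rightarrow> 'c::real_vector"
  assumes "finite B" "finite C" "\<And>I. I \<in> B \<Longrightarrow> \<sigma> I \<subseteq> C"
  shows "(\<Sum>I\<in>B. \<Sum>x\<in>\<sigma> I. f x) = (\<Sum>x\<in>C. real (card {I\<in>B. x \<in> \<sigma> I}) *\<^sub>R f x)"
proof -
  have "(\<Sum>I\<in>B. \<Sum>x\<in>\<sigma> I. f x) = (\<Sum>I\<in>B. \<Sum>x\<in>C. if x \<in> \<sigma> I then f x else 0)"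
  proof (rule sum.cong[OF refl])
    fix I assume "I \<in> B"
    hence "\<sigma> I \<subseteq> C" using assms by auto
    thus "(\<Sum>x\<in>\<sigma> I. f x) = (\<Sum>x\<in>C. if x \<in> \<sigma> I then f x else 0)"
      using assms(2) by (simp add: sum.If_cases Int_absorb1)
  qed
  also have "\<dots> = (\<Sum>x\<in>C. \<Sum>I\<in>B. if x \<in> \<sigma> I then f x else 0)" by (rule sum.swap)
  also have "\<dots> = (\<Sum>x\<in>C. real (card {I\<in>B. x \<in> \<sigma> I}) *\<^sub>R f x)"
  proof (rule sum.cong[OF refl])
    fix x
    have "(\<Sum>I\<in>B. if x \<in> \<sigma> I then f x else 0) = (\<Sum>I\<in>{I\<in>B. x \<in> \<sigma> I}. f x)"
      using assms(1) by (simp add: sum.If_cases Int_def)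
    also have "\<dots> = real (card {I\<in>B. x \<in> \<sigma> I}) *\<^sub>R f x" by (simp add: sum_constant_scaleR)
    finally show "(\<Sum>I\<in>B. if x \<in> \<sigma> I then f x else 0) = real (card {I\<in>B. x \<in> \<sigma> I}) *\<^sub>R f x" .
  qed
  finally show ?thesis .
qed

lemma final_arith:
  fixes E a Q V c gam :: real
  assumes "a \<le> E" "0 < a" "V = Q - E^2" "0 \<le> V" "Q - a^2 \<le> c * gam / 2" "0 \<le> c * gam"
  shows "0 \<le> E - a \<and> E - a \<le> c * gam / (E + a) \<and> c * gam / (E + a) \<le> c * gam / (2 * a)
     \<and> V \<le> c * gam \<and> sqrt V / E \<le> sqrt (c * gam / a^2)"
proof -
  have Ep: "E > 0" using assms by linarith
  have "(E - a) * (E + a) \<le> c * gam" using assms by (simp add: power2_eq_square algebra_simps)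
  hence 2: "E - a \<le> c * gam / (E + a)" using Ep assms by (simp add: pos_le_divide_eq)
  have 3: "c * gam / (E + a) \<le> c * gam / (2 * a)"
    by (rule divide_left_mono) (use assms in auto)
  have "E^2 \<ge> a^2" using assms by (simp add: power_mono)
  hence 4: "V \<le> c * gam" using assms by linarith
  have "sqrt V / E \<le> sqrt V / a" by (rule divide_left_mono) (use assms Ep in auto)
  also have "\<dots> = sqrt (V / a^2)" using assms by (simp add: real_sqrt_divide)
  also have "\<dots> \<le> sqrt (c * gam / a^2)" using 4 assms by (intro real_sqrt_le_mono divide_right_mono) auto
  finally show ?thesis using 2 3 4 assms by auto
qed

lemma Q_arith:
  fixes n m s A gam Q :: real
  assumes "n \<ge> 2" "m \<ge> 1" "m \<le> n" "s \<ge> 0" "A \<le> n * gam"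
    "Q = (m - 1) / (m * n * (n - 1)) * s + (n - m) / (m * n * (n - 1)) * A"
  shows "Q - s / n^2 \<le> (n - m) / (m * (n - 1)) * gam"
proof -
  have h: "n - 1 \<noteq> 0" "n \<noteq> 0" "m \<noteq> 0" using assms by auto
  have hp: "n - 1 > 0" "n > 0" "m > 0" using assms by auto
  have "Q - s / n^2 = (m - n) / (m * n^2 * (n - 1)) * s + (n - m) / (m * n * (n - 1)) * A"
  proof -
    have e1: "(m - 1) / (m * n * (n - 1)) * s - s / n^2 = (m - n) / (m * n^2 * (n - 1)) * s"
      using hp by (simp add: divide_simps power2_eq_square) (simp add: algebra_simps)
    show ?thesis using e1 assms(6) by simp
  qed
  also have "\<dots> \<le> 0 + (n - m) / (m * n * (n - 1)) * (n * gam)"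
    using assms by (intro add_mono mult_left_mono mult_nonneg_nonneg) (auto intro!: divide_nonpos_pos simp: mult_nonpos_nonneg)
  also have "\<dots> = (n - m) / (m * (n - 1)) * gam" using h by (simp add: field_simps)
  finally show ?thesis .
qed

lemma Qform_arith:
  fixes m n NN ss AA :: real assumes "m > 0" "n > 1" "NN > 0"
  shows "1 / m^2 * (m*(m-1)*NN/(n*(n-1)) * ss + (m*NN/n - m*(m-1)*NN/(n*(n-1))) * AA) / NN
       = (m-1)/(m*n*(n-1))* ss + (n-m)/(m*n*(n-1))*AA"
proof -
  obtain D where D: "D = n*(n-1)" by blast
  have Dp: "D > 0" using assms D by simp
  have i: "1/n = (n-1)/D" using D assms by simp
  have j: "1/n - (m-1)/D = (n-m)/D" unfolding i by (simp add: diff_divide_distrib)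
  have "1 / m^2 * (m*(m-1)*NN/D * ss + (m*NN/n - m*(m-1)*NN/D) * AA) / NN
      = (1/m) * ((m-1)/D* ss + (1/n - (m-1)/D)*AA)"
    using assms Dp by (simp add: field_simps power2_eq_square)
  also have "\<dots> = (m-1)/(m*D)* ss + (n-m)/(m*D)*AA" unfolding j using assms Dp by (simp add: field_simps)
  finally show ?thesis unfolding D by (simp add: mult.assoc)
qed

theorem theorem1:
  fixes n m :: nat and g :: "nat \<Rightarrow> 'a::euclidean_space"
  assumes "n \<ge> 2" and "1 \<le> m" and "m \<le> n"
    and "full_grad n g \<noteq> 0"
  defines "E \<equiv> measure_pmf.expectation (pmf_of_set (batches n m)) (\<lambda>I. norm (batch_grad m g I))"
    and "V \<equiv> measure_pmf.variance (pmf_of_set (batches n m)) (\<lambda>I. norm (batch_grad m g I))"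
    and "\<gamma> \<equiv> grad_gamma n g"
    and "c \<equiv> 2 * real (n - m) / (real m * real (n - 1))"
  shows "0 \<le> E - norm (full_grad n g)
       \<and> E - norm (full_grad n g) \<le> c * \<gamma> / (E + norm (full_grad n g))
       \<and> c * \<gamma> / (E + norm (full_grad n g))
           \<le> real (n - m) * \<gamma> / (real m * real (n - 1) * norm (full_grad n g))
       \<and> V \<le> c * \<gamma>
       \<and> sqrt V / E \<le> sqrt (c * (\<gamma> / (norm (full_grad n g))\<^sup>2))"
proof -
  define A0 where "A0 = {1..n}"
  define B where "B = batches n m"
  define h where "h = (\<lambda>I. norm (batch_grad m g I))"
  define S where "S = (\<Sum>i\<in>A0. g i)"
  define G where "G = full_grad n g"
  define N where "N = real (card B)"
  define f where "f = (\<lambda>i j. inner (g i) (g j))"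
  define K1 where "K1 = (n - 1) choose (m - 1)"
  define K2 where "K2 = (if m \<ge> 2 then (n - 2) choose (m - 2) else 0)"
  have fA0: "finite A0" and cA0: "card A0 = n" unfolding A0_def by auto
  have Bdef: "B = {I. I \<subseteq> A0 \<and> card I = m}" unfolding B_def batches_def A0_def by simp
  have Bsub: "\<And>I. I \<in> B \<Longrightarrow> I \<subseteq> A0" unfolding Bdef by auto
  have fB: "finite B"
  proof -
    have "B \<subseteq> Pow A0" using Bsub by auto
    thus ?thesis using fA0 by (meson finite_Pow_iff finite_subset)
  qed
  have cardB: "card B = n choose m" unfolding Bdef using n_subsets[OF fA0] cA0 by simp
  have Bne: "B \<noteq> {}" using cardB zero_less_binomial[OF assms(3)] by auto
  have Npos: "N > 0" unfolding N_def using Bne fB by (simp add: card_gt_0_iff)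
  have E_eq: "E = (\<Sum>I\<in>B. h I) / N"
    unfolding E_def h_def N_def B_def[symmetric] using Bne fB by (simp add: integral_pmf_of_set)
  have V_eq: "V = (\<Sum>I\<in>B. (h I - E)^2) / N"
    unfolding V_def h_def N_def B_def[symmetric] E_def using Bne fB by (simp add: integral_pmf_of_set)
  define Q where "Q = (\<Sum>I\<in>B. (h I)^2) / N"
  have sumh: "(\<Sum>I\<in>B. h I) = N * E" using E_eq Npos by simp
  have "(\<Sum>I\<in>B. (h I - E)^2) = (\<Sum>I\<in>B. (h I)^2) - 2 * E * (\<Sum>I\<in>B. h I) + N * E^2"
    by (simp add: power2_diff sum.distrib sum_subtractf sum_distrib_left N_def algebra_simps flip: sum_distrib_left sum_distrib_right)
  hence VQ: "V = Q - E^2" unfolding V_eq Q_def using sumh Npos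
    by (simp add: field_simps power2_eq_square)
  have V0: "V \<ge> 0" unfolding V_eq using Npos by (intro divide_nonneg_pos sum_nonneg) auto
  have cnt1: "card {I\<in>B. i \<in> I} = K1" if "i \<in> A0" for i
  proof -
    have "{I\<in>B. i \<in> I} = {I. I \<subseteq> A0 \<and> card I = m \<and> {i} \<subseteq> I}" unfolding Bdef by auto
    thus ?thesis using cntU[of A0 "{i}" m] fA0 that assms cA0 unfolding K1_def by simp
  qed
  have cnt2: "card {I\<in>B. (i,j) \<in> I \<times> I} = (if i = j then K1 else K2)" if "i \<in> A0" "j \<in> A0" for i j
  proof (cases "i = j")
    case True
    have "{I\<in>B. (i,j) \<in> I \<times> I} = {I\<in>B. i \<in> I}" using True by auto
    thus ?thesis using cnt1 that True by simp
  next
    case False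
    have eq: "{I\<in>B. (i,j) \<in> I \<times> I} = {I. I \<subseteq> A0 \<and> card I = m \<and> {i,j} \<subseteq> I}" unfolding Bdef by auto
    show ?thesis
    proof (cases "m \<ge> 2")
      case True
      thus ?thesis using cntU[of A0 "{i,j}" m] fA0 that assms cA0 False eq unfolding K2_def by (simp add: numeral_2_eq_2)
    next
      case m1: False
      have emp: "{I. I \<subseteq> A0 \<and> card I = m \<and> {i,j} \<subseteq> I} = {}"
      proof (rule ccontr)
        assume "{I. I \<subseteq> A0 \<and> card I = m \<and> {i,j} \<subseteq> I} \<noteq> {}"
        then obtain I where I: "I \<subseteq> A0" "card I = m" "{i,j} \<subseteq> I" by auto
        have "finite I" using I fA0 finite_subset by blast
        hence "card {i,j} \<le> card I" using I card_mono by blast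
        thus False using I False m1 by simp
      qed
      have "card {I\<in>B. (i,j) \<in> I \<times> I} = 0" using eq emp by (metis card.empty)
      thus ?thesis using m1 False unfolding K2_def by simp
    qed
  qed
  have rel1: "real m * N = real n * real K1"
    unfolding N_def cardB K1_def using times_binomial_minus1_eq[of m n] assms
    by (metis of_nat_mult less_le_trans zero_less_one)
  have rel2: "real m * (real m - 1) * N = real n * (real n - 1) * real K2"
  proof (cases "m \<ge> 2")
    case True
    have "(m - 1) * ((n - 1) choose (m - 1)) = (n - 1) * ((n - 1 - 1) choose (m - 1 - 1))"
      using times_binomial_minus1_eq[of "m - 1" "n - 1"] True by simp
    hence "real (m - 1) * real K1 = real (n - 1) * real K2" unfolding K1_def K2_def using True
      by (metis (mono_tags, lifting) diff_diff_left of_nat_mult one_add_one)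
    hence "real m * (real m - 1) * N = real n * (real n - 1) * real K2"
      using rel1 True assms by (simp add: of_nat_diff) (metis mult.assoc mult.commute)
    thus ?thesis .
  next
    case False
    hence "m = 1" using assms by simp
    thus ?thesis unfolding K2_def by simp
  qed
  define \<Gamma> where "\<Gamma> = {\<bar>inner (g i) (g j)\<bar> | i j. i \<in> {1..n} \<and> j \<in> {1..n}}"
  have \<Gamma>eq: "\<Gamma> = (\<lambda>(i,j). \<bar>inner (g i) (g j)\<bar>) ` ({1..n} \<times> {1..n})" unfolding \<Gamma>_def by (auto simp: image_iff) (metis atLeastAtMost_iff)
  have f\<Gamma>: "finite \<Gamma>" unfolding \<Gamma>eq by simp
  have fii: "f i i \<le> \<gamma>" if "i \<in> A0" for i
  proof -
    have "\<bar>f i i\<bar> \<in> \<Gamma>" using that unfolding \<Gamma>_def f_def A0_def by blast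
    hence "\<bar>f i i\<bar> \<le> \<gamma>" using f\<Gamma> unfolding \<gamma>_def grad_gamma_def \<Gamma>_def[symmetric] by simp
    thus ?thesis by simp
  qed
  have gam0: "\<gamma> \<ge> 0"
  proof -
    have "\<bar>f 1 1\<bar> \<in> \<Gamma>" using assms unfolding \<Gamma>_def f_def by force
    hence "\<bar>f 1 1\<bar> \<le> \<gamma>" using f\<Gamma> unfolding \<gamma>_def grad_gamma_def \<Gamma>_def[symmetric] by simp
    thus ?thesis by simp
  qed
  define Asum where "Asum = (\<Sum>i\<in>A0. f i i)"
  have Asum_le: "Asum \<le> real n * \<gamma>"
    unfolding Asum_def using sum_bounded_above[of A0 "\<lambda>i. f i i" \<gamma>] fii cA0 by simp
  have mpos: "real m > 0" using assms by simp
  have hsq: "(h I)^2 = (1 / (real m)^2) * (\<Sum>i\<in>I. \<Sum>j\<in>I. f i j)" for I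
  proof -
    have "h I = (1 / real m) * norm (\<Sum>i\<in>I. g i)" unfolding h_def batch_grad_def using mpos by simp
    hence "(h I)^2 = (1 / (real m)^2) * (norm (\<Sum>i\<in>I. g i))^2" by (simp add: power_mult_distrib power_divide)
    also have "(norm (\<Sum>i\<in>I. g i))^2 = (\<Sum>i\<in>I. \<Sum>j\<in>I. f i j)"
      unfolding power2_norm_eq_inner f_def by (simp add: inner_sum_left inner_sum_right) (rule sum.swap)
    finally show ?thesis .
  qed
  have dbl: "(\<Sum>I\<in>B. \<Sum>i\<in>I. \<Sum>j\<in>I. f i j) = real K2 * (norm S)^2 + (real K1 - real K2) * Asum"
  proof -
    have "(\<Sum>I\<in>B. \<Sum>i\<in>I. \<Sum>j\<in>I. f i j) = (\<Sum>I\<in>B. \<Sum>p\<in>I \<times> I. case p of (i,j) \<Rightarrow> f i j)"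
      by (simp add: sum.cartesian_product)
    also have "\<dots> = (\<Sum>p\<in>A0 \<times> A0. real (card {I\<in>B. p \<in> I \<times> I}) *\<^sub>R (case p of (i,j) \<Rightarrow> f i j))"
      by (rule sum_swap_count) (use fB fA0 Bsub in auto)
    also have "\<dots> = (\<Sum>p\<in>A0 \<times> A0. case p of (i,j) \<Rightarrow> (if i = j then real K1 else real K2) * f i j)"
    proof (rule sum.cong[OF refl])
      fix p assume "p \<in> A0 \<times> A0"
      then obtain i j where p: "p = (i,j)" "i \<in> A0" "j \<in> A0" by auto
      show "real (card {I\<in>B. p \<in> I \<times> I}) *\<^sub>R (case p of (i,j) \<Rightarrow> f i j) = (case p of (i,j) \<Rightarrow> (if i = j then real K1 else real K2) * f i j)"
        unfolding p(1) using cnt2[OF p(2,3)] by (simp only: prod.case) simp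
    qed
    also have "\<dots> = (\<Sum>i\<in>A0. \<Sum>j\<in>A0. (if i = j then real K1 else real K2) * f i j)"
      by (simp add: sum.cartesian_product)
    also have "\<dots> = (\<Sum>i\<in>A0. \<Sum>j\<in>A0. real K2 * f i j + (if i = j then (real K1 - real K2) * f i j else 0))"
      by (intro sum.cong refl) (auto simp: algebra_simps)
    also have "\<dots> = real K2 * (\<Sum>i\<in>A0. \<Sum>j\<in>A0. f i j) + (real K1 - real K2) * Asum"
      using fA0 by (simp add: sum.distrib sum_distrib_left Asum_def)
    also have "(\<Sum>i\<in>A0. \<Sum>j\<in>A0. f i j) = (norm S)^2"
      unfolding power2_norm_eq_inner f_def S_def by (simp add: inner_sum_left inner_sum_right) (rule sum.swap)
    finally show ?thesis .
  qed
  have Qeq: "Q = (1 / (real m)^2) * (real K2 * (norm S)^2 + (real K1 - real K2) * Asum) / N"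
  proof -
    have "(\<Sum>I\<in>B. (h I)^2) = (1 / (real m)^2) * (\<Sum>I\<in>B. \<Sum>i\<in>I. \<Sum>j\<in>I. f i j)"
      by (simp only: hsq sum_distrib_left)
    thus ?thesis unfolding Q_def dbl by simp
  qed
  have npos: "real n > 0" "real n - 1 > 0" using assms by auto
  have K1e: "real K1 = real m * N / real n" using rel1 npos by (simp add: field_simps)
  have K2e: "real K2 = real m * (real m - 1) * N / (real n * (real n - 1))" using rel2 npos by (simp add: field_simps)
  have Qform: "Q = (real m - 1) / (real m * real n * (real n - 1)) * (norm S)^2
      + (real n - real m) / (real m * real n * (real n - 1)) * Asum"
    unfolding Qeq K1e K2e by (rule Qform_arith) (use npos mpos Npos in auto)
  have Sn: "G = (1 / real n) *\<^sub>R S" unfolding G_def full_grad_def S_def A0_def ..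
  have sumbg: "(\<Sum>I\<in>B. batch_grad m g I) = (N / real n) *\<^sub>R S"
  proof -
    have "(\<Sum>I\<in>B. batch_grad m g I) = (1 / real m) *\<^sub>R (\<Sum>I\<in>B. \<Sum>i\<in>I. g i)"
      unfolding batch_grad_def by (simp add: scaleR_sum_right)
    also have "(\<Sum>I\<in>B. \<Sum>i\<in>I. g i) = (\<Sum>i\<in>A0. real (card {I\<in>B. i \<in> I}) *\<^sub>R g i)"
      by (rule sum_swap_count[where \<sigma>="\<lambda>I. I", simplified]) (use fB fA0 Bsub in auto)
    also have "\<dots> = (\<Sum>i\<in>A0. real K1 *\<^sub>R g i)" by (rule sum.cong) (auto simp: cnt1)
    also have "\<dots> = real K1 *\<^sub>R S" unfolding S_def by (simp add: scaleR_sum_right)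
    finally show ?thesis using K1e mpos by simp
  qed
  have GE: "norm G \<le> E"
  proof -
    have "G = (1 / N) *\<^sub>R (\<Sum>I\<in>B. batch_grad m g I)" unfolding sumbg Sn using Npos by simp
    hence "norm G = (1 / N) * norm (\<Sum>I\<in>B. batch_grad m g I)" using Npos by simp
    also have "\<dots> \<le> (1 / N) * (\<Sum>I\<in>B. h I)" unfolding h_def using Npos
      by (intro mult_left_mono norm_sum) auto
    finally show ?thesis unfolding E_eq by simp
  qed
  have Gpos: "norm G > 0" using assms(4) unfolding G_def by simp
  have G2: "(norm G)^2 = (norm S)^2 / (real n)^2" unfolding Sn using npos by (simp add: power_divide)
  have Qb: "Q - (norm S)^2 / (real n)^2 \<le> (real n - real m) / (real m * (real n - 1)) * \<gamma>"
    by (rule Q_arith[OF _ _ _ _ Asum_le Qform]) (use assms in auto)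
  have cg: "c * \<gamma> / 2 = (real n - real m) / (real m * (real n - 1)) * \<gamma>"
  proof -
    have "c = 2 * ((real n - real m) / (real m * (real n - 1)))" unfolding c_def using assms by (simp add: of_nat_diff)
    hence "c / 2 = (real n - real m) / (real m * (real n - 1))" by linarith
    moreover have "c * \<gamma> / 2 = (c / 2) * \<gamma>" by simp
    ultimately show ?thesis by metis
  qed
  have fa: "0 \<le> E - norm G \<and> E - norm G \<le> c * \<gamma> / (E + norm G) \<and> c * \<gamma> / (E + norm G) \<le> c * \<gamma> / (2 * norm G)
     \<and> V \<le> c * \<gamma> \<and> sqrt V / E \<le> sqrt (c * \<gamma> / (norm G)^2)"
  proof (rule final_arith[OF GE Gpos VQ V0])
    show "Q - (norm G)^2 \<le> c * \<gamma> / 2" using Qb G2 cg by simp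
    show "0 \<le> c * \<gamma>" unfolding c_def using gam0 assms by simp
  qed
  have last: "c * \<gamma> / (2 * norm G) = real (n - m) * \<gamma> / (real m * real (n - 1) * norm G)"
    unfolding c_def by simp
  show ?thesis using fa unfolding last G_def[symmetric] by simp
qed
end
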